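(* Let $F,\theta \geq 1$ be integers with $F \geq 4\theta$, and let $p_j = \binom{F}{j} 2^{-F}$ for $j = 0,\ldots,F$. Then $$\sum_{j \leq \theta} (-j)\, p_j + \sum_{\theta < j \leq F} \big(j + 2(1 - j/F - \theta)\big) p_j > 0.$$
   Context: This quantity is the expected value $E\phi(e)$ of the weight $\phi(e) = -\zeta_0(e)$ if $\zeta_0(e) \leq \theta$ and $\phi(e) = \zeta_0(e) + 2(X - \theta)$ otherwise, where $\zeta_0(e) \sim \mathrm{Binomial}(F,1/2)$ and, given $\zeta_0(e)$, $X$ is Bernoulli$(1 - \zeta_0(e)/F)$. *)

theory Defs
  imports Complex_Main
begin

end

theory Submission
  imports Defs
begin

theorem lemma5:
  fixes F \<theta> :: nat
  assumes "F \<ge> 1" and "\<theta> \<ge> 1" and "F \<ge> 4 * \<theta>"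
  defines "p \<equiv> (\<lambda>j::nat. real (F choose j) / 2 ^ F)"
  shows "(\<Sum>j\<in>{0..\<theta>}. (- real j) * p j)
         + (\<Sum>j\<in>{\<theta><..F}. (real j + 2 * (1 - real j / real F - real \<theta>)) * p j) > 0"
proof -
  define h where "h j = (if j \<le> \<theta> then (- real j) * p j
        else (real j + 2 * (1 - real j / real F - real \<theta>)) * p j)" for j
  define r where "r j = (if j \<le> \<theta> then (2 * real \<theta> - 2 * real j) * p j
        else 2 * (1 - real j / real F) * p j)" for j
  have s1: "{..F} \<inter> {j. j \<le> \<theta>} = {0..\<theta>}" using assms by auto
  have s2: "{..F} \<inter> - {j. j \<le> \<theta>} = {\<theta><..F}" by auto
  have eq: "(\<Sum>j\<in>{0..\<theta>}. (- real j) * p j)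
         + (\<Sum>j\<in>{\<theta><..F}. (real j + 2 * (1 - real j / real F - real \<theta>)) * p j)
        = (\<Sum>j\<le>F. h j)"
    unfolding h_def sum.If_cases[OF finite_atMost] s1 s2 by simp
  have hr: "h j = (real j - 2 * real \<theta>) * p j + r j" for j
    unfolding h_def r_def by (simp add: algebra_simps)
  have pp: "p j \<ge> 0" for j unfolding p_def by simp
  have rnn: "r j \<ge> 0" if "j \<le> F" for j
  proof (cases "j \<le> \<theta>")
    case True then show ?thesis unfolding r_def using pp[of j] by simp
  next
    case False
    have "real j / real F \<le> 1" using that assms by (simp add: divide_le_eq)
    then show ?thesis unfolding r_def using False pp[of j] by simp
  qed
  have r0: "r 0 > 0" unfolding r_def p_def using assms by simp
  have rpos: "(\<Sum>j\<le>F. r j) > 0"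
    by (rule sum_pos2[of _ 0]) (use r0 rnn in auto)
  have lin: "(\<Sum>j\<le>F. real j * real (F choose j)) = real F * 2 ^ (F - 1)"
  proof -
    have "(\<Sum>j\<le>F. real j * real (F choose j)) = real (\<Sum>j\<le>F. j * (F choose j))"
      by simp
    also have "\<dots> = real F * 2 ^ (F - 1)" by (simp add: choose_linear_sum)
    finally show ?thesis .
  qed
  have row: "(\<Sum>j\<le>F. real (F choose j)) = 2 ^ F"
  proof -
    have "(\<Sum>j\<le>F. real (F choose j)) = real (\<Sum>j\<le>F. F choose j)" by simp
    also have "\<dots> = 2 ^ F" by (simp add: choose_row_sum)
    finally show ?thesis .
  qed
  have "(\<Sum>j\<le>F. (real j - 2 * real \<theta>) * p j)
      = ((\<Sum>j\<le>F. real j * real (F choose j)) - 2 * real \<theta> * (\<Sum>j\<le>F. real (F choose j))) / 2 ^ F"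
    unfolding p_def sum_divide_distrib[symmetric] sum_distrib_left sum_subtractf[symmetric]
    by (simp add: algebra_simps sum_divide_distrib diff_divide_distrib)
  also have "\<dots> = (real F * 2 ^ (F - 1) - 2 * real \<theta> * 2 ^ F) / 2 ^ F" using lin row by simp
  also have "\<dots> \<ge> 0"
  proof -
    have "(2::real) ^ F = 2 * 2 ^ (F - 1)" using assms
      by (metis One_nat_def Suc_diff_le diff_Suc_1 power_Suc)
    moreover have "real F \<ge> 4 * real \<theta>" using assms by linarith
    ultimately have "real F * 2 ^ (F - 1) - 2 * real \<theta> * 2 ^ F \<ge> 0"
      by (simp add: algebra_simps)
    then show ?thesis by simp
  qed
  finally have "(\<Sum>j\<le>F. (real j - 2 * real \<theta>) * p j) \<ge> 0" .
  then have "(\<Sum>j\<le>F. h j) > 0" using rpos unfolding hr sum.distrib by linarith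
  then show ?thesis using eq by simp
qed

end
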